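(* Let $s_X\colon X\to P$ and $s_Y\colon Y\to Q$ be stratified topological spaces such that the simplicial set $\mathrm{Exit}_P(X)$ is an $\infty$-category (i.e. a quasi-category). Assume we are given a stratified embedding $Y\hookrightarrow X$ which is a consecutive inclusion of strata: $Q\subseteq P$ is a consecutive (convex) subposet, i.e. if $a\le b\le c$ in $P$ with $a,c\in Q$ then $b\in Q$, and $Y=s_X^{-1}(Q)$ with $s_Y$ the restriction of $s_X$. Then $\mathrm{Exit}_Q(Y)$ is an $\infty$-category and the induced functor $\mathrm{Exit}_Q(Y)\to\mathrm{Exit}_P(X)$ is fully faithful.
   Context: A stratified space is a continuous map $s\colon X\to P$ where the poset $P$ carries the Alexandroff topology (upward closed sets are open). For such, the exit-path simplicial set $\mathrm{Exit}_P(X)$ is defined as the pullback of simplicial sets $N(P)\times_{\mathrm{Sing}(P)}\mathrm{Sing}(X)$, where $N(P)$ is the nerve of $P$, $\mathrm{Sing}$ is the singular simplicial set functor, $N(P)\to\mathrm{Sing}(P)$ is the canonical map and $\mathrm{Sing}(X)\to\mathrm{Sing}(P)$ is induced by $s$. $\infty$-categories are modeled as quasi-categories (fibrant objects of the Joyal model structure). *)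

theory Defs
  imports "HOL-Homology.Homology"
begin

text \<open>A monotone map [m] -> [n] of the simplex category, given by its values on 0..m.\<close>
definition simplex_op :: "nat \<Rightarrow> nat \<Rightarrow> (nat \<Rightarrow> nat) \<Rightarrow> bool" where
  "simplex_op m n \<theta> \<equiv> (\<forall>i\<le>m. \<theta> i \<le> n) \<and> (\<forall>i j. i \<le> j \<and> j \<le> m \<longrightarrow> \<theta> i \<le> \<theta> j)"

text \<open>simp X n: the n-simplices; act X m n theta x: the simplicial operator theta^* applied
  to an n-simplex x, for theta : [m] -> [n].\<close>
record 'a sset =
  simp :: "nat \<Rightarrow> 'a set"
  act :: "nat \<Rightarrow> nat \<Rightarrow> (nat \<Rightarrow> nat) \<Rightarrow> 'a \<Rightarrow> 'a"

definition is_sset :: "'a sset \<Rightarrow> bool" where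
  "is_sset X \<equiv>
     (\<forall>m n \<theta> x. simplex_op m n \<theta> \<and> x \<in> simp X n \<longrightarrow> act X m n \<theta> x \<in> simp X m)
   \<and> (\<forall>n x. x \<in> simp X n \<longrightarrow> act X n n id x = x)
   \<and> (\<forall>k m n \<theta> \<psi> x. simplex_op m n \<theta> \<and> simplex_op k m \<psi> \<and> x \<in> simp X n \<longrightarrow>
          act X k n (\<theta> \<circ> \<psi>) x = act X k m \<psi> (act X m n \<theta> x))
   \<and> (\<forall>m n \<theta> \<theta>' x. (\<forall>i\<le>m. \<theta> i = \<theta>' i) \<longrightarrow> act X m n \<theta> x = act X m n \<theta>' x)"

definition smap :: "(nat \<Rightarrow> 'a \<Rightarrow> 'b) \<Rightarrow> 'a sset \<Rightarrow> 'b sset \<Rightarrow> bool" where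
  "smap f X Y \<equiv> (\<forall>n x. x \<in> simp X n \<longrightarrow> f n x \<in> simp Y n)
     \<and> (\<forall>m n \<theta> x. simplex_op m n \<theta> \<and> x \<in> simp X n \<longrightarrow>
           f m (act X m n \<theta> x) = act Y m n \<theta> (f n x))"

definition coface :: "nat \<Rightarrow> nat \<Rightarrow> nat" where
  "coface i j = (if j < i then j else Suc j)"

text \<open>Quasi-category: every inner horn Lambda^n_k -> X (0 < k < n), given as a compatible
  family of (n-1)-simplices y_i (i <> k), extends to an n-simplex.\<close>
definition quasi_category :: "'a sset \<Rightarrow> bool" where
  "quasi_category X \<equiv> is_sset X \<and>
    (\<forall>n k y. 0 < k \<and> k < n
       \<and> (\<forall>i\<le>n. i \<noteq> k \<longrightarrow> y i \<in> simp X (n - 1))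
       \<and> (\<forall>i j. i < j \<and> j \<le> n \<and> i \<noteq> k \<and> j \<noteq> k \<longrightarrow>
             act X (n - 2) (n - 1) (coface i) (y j) = act X (n - 2) (n - 1) (coface (j - 1)) (y i))
     \<longrightarrow> (\<exists>x\<in>simp X n. \<forall>i\<le>n. i \<noteq> k \<longrightarrow> act X (n - 1) n (coface i) x = y i))"

text \<open>Nerve of a poset (carrier P, order inherited from the type).\<close>
definition nerve :: "'p::order set \<Rightarrow> (nat \<Rightarrow> 'p) sset" where
  "nerve P = \<lparr> simp = (\<lambda>n. {c. (\<forall>i\<le>n. c i \<in> P) \<and> (\<forall>i j. i \<le> j \<and> j \<le> n \<longrightarrow> c i \<le> c j)
                                 \<and> (\<forall>i>n. c i = undefined)}),
              act = (\<lambda>m n \<theta> c. (\<lambda>i. if i \<le> m then c (\<theta> i) else undefined)) \<rparr>"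

definition simplex_op_map :: "nat \<Rightarrow> (nat \<Rightarrow> nat) \<Rightarrow> (nat \<Rightarrow> real) \<Rightarrow> (nat \<Rightarrow> real)" where
  "simplex_op_map m \<theta> = oriented_simplex m (\<lambda>j i. if i = \<theta> j then 1 else 0)"

definition Sing :: "'a topology \<Rightarrow> ((nat \<Rightarrow> real) \<Rightarrow> 'a) sset" where
  "Sing X = \<lparr> simp = (\<lambda>n. singular_simplex_set n X),
             act = (\<lambda>m n \<theta> \<sigma>. restrict (\<sigma> \<circ> simplex_op_map m \<theta>) (standard_simplex m)) \<rparr>"

definition alexandroff :: "'p::order set \<Rightarrow> 'p topology" where
  "alexandroff P = topology (\<lambda>U. U \<subseteq> P \<and> (\<forall>x\<in>U. \<forall>y\<in>P. x \<le> y \<longrightarrow> y \<in> U))"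

definition nerve_to_sing :: "nat \<Rightarrow> (nat \<Rightarrow> 'p) \<Rightarrow> (nat \<Rightarrow> real) \<Rightarrow> 'p" where
  "nerve_to_sing n c = restrict (\<lambda>t. c (Max {i. i \<le> n \<and> t i \<noteq> 0})) (standard_simplex n)"

definition pullback :: "'a sset \<Rightarrow> 'b sset \<Rightarrow> (nat \<Rightarrow> 'a \<Rightarrow> 'c) \<Rightarrow> (nat \<Rightarrow> 'b \<Rightarrow> 'c) \<Rightarrow> ('a \<times> 'b) sset" where
  "pullback A B f g = \<lparr> simp = (\<lambda>n. {(a, b). a \<in> simp A n \<and> b \<in> simp B n \<and> f n a = g n b}),
                        act = (\<lambda>m n \<theta> (a, b). (act A m n \<theta> a, act B m n \<theta> b)) \<rparr>"

definition Exit :: "'p::order set \<Rightarrow> ('x \<Rightarrow> 'p) \<Rightarrow> 'x topology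
                    \<Rightarrow> ((nat \<Rightarrow> 'p) \<times> ((nat \<Rightarrow> real) \<Rightarrow> 'x)) sset" where
  "Exit P s X = pullback (nerve P) (Sing X) nerve_to_sing (\<lambda>n \<sigma>. simplex_map n s \<sigma>)"

text \<open>Right morphism space Hom^R_C(x,y) (Lurie, HTT 1.2.2): its n-simplices are the
  (n+1)-simplices of C with last vertex y and whose face opposite the last vertex is the
  constant n-simplex at x.\<close>
definition homR :: "'a sset \<Rightarrow> 'a \<Rightarrow> 'a \<Rightarrow> 'a sset" where
  "homR C x y = \<lparr> simp = (\<lambda>n. {\<sigma> \<in> simp C (Suc n).
                           act C 0 (Suc n) (\<lambda>_. Suc n) \<sigma> = y
                         \<and> act C n (Suc n) id \<sigma> = act C n 0 (\<lambda>_. 0) x}),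
                  act = (\<lambda>m n \<theta> \<sigma>. act C (Suc m) (Suc n) (\<lambda>i. if i \<le> m then \<theta> i else Suc n) \<sigma>) \<rparr>"

definition prod_sset :: "'a sset \<Rightarrow> 'b sset \<Rightarrow> ('a \<times> 'b) sset" where
  "prod_sset A B = \<lparr> simp = (\<lambda>n. simp A n \<times> simp B n),
                     act = (\<lambda>m n \<theta> (a, b). (act A m n \<theta> a, act B m n \<theta> b)) \<rparr>"

definition Delta1 :: "(nat \<Rightarrow> nat) sset" where
  "Delta1 = nerve {0, 1}"

definition const_simplex :: "nat \<Rightarrow> nat \<Rightarrow> nat \<Rightarrow> nat" where
  "const_simplex n v = (\<lambda>i. if i \<le> n then v else undefined)"

definition shomotopic :: "'a sset \<Rightarrow> 'b sset \<Rightarrow> (nat \<Rightarrow> 'a \<Rightarrow> 'b) \<Rightarrow> (nat \<Rightarrow> 'a \<Rightarrow> 'b) \<Rightarrow> bool" where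
  "shomotopic K L \<phi> \<psi> \<equiv> (\<exists>h. smap h (prod_sset K Delta1) L \<and>
      (\<forall>n \<sigma>. \<sigma> \<in> simp K n \<longrightarrow> h n (\<sigma>, const_simplex n 0) = \<phi> n \<sigma> \<and> h n (\<sigma>, const_simplex n 1) = \<psi> n \<sigma>))"

definition shomotopy_equivalence :: "'a sset \<Rightarrow> 'b sset \<Rightarrow> (nat \<Rightarrow> 'a \<Rightarrow> 'b) \<Rightarrow> bool" where
  "shomotopy_equivalence K L f \<equiv> smap f K L \<and>
     (\<exists>g. smap g L K \<and> shomotopic K K (\<lambda>n x. g n (f n x)) (\<lambda>n x. x)
                     \<and> shomotopic L L (\<lambda>n x. f n (g n x)) (\<lambda>n x. x))"

definition fully_faithful :: "'a sset \<Rightarrow> 'b sset \<Rightarrow> (nat \<Rightarrow> 'a \<Rightarrow> 'b) \<Rightarrow> bool" where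
  "fully_faithful C D F \<equiv> quasi_category C \<and> quasi_category D \<and> smap F C D \<and>
     (\<forall>x\<in>simp C 0. \<forall>y\<in>simp C 0.
        shomotopy_equivalence (homR C x y) (homR D (F 0 x) (F 0 y)) (\<lambda>n \<sigma>. F (Suc n) \<sigma>))"

end

theory Submission
  imports Defs
begin

lemma std_simplex_nz:
  assumes "t \<in> standard_simplex n"
  shows "\<exists>i\<le>n. t i \<noteq> 0"
proof (rule ccontr)
  assume "\<not> ?thesis"
  then have "(\<Sum>i\<le>n. t i) = 0" by auto
  with assms show False by (simp add: standard_simplex_def)
qed

lemma max_le:
  assumes "t \<in> standard_simplex n"
  shows "Max {i. i \<le> n \<and> t i \<noteq> 0} \<le> n"
proof -
  have "{i. i \<le> n \<and> t i \<noteq> 0} \<noteq> {}" using std_simplex_nz[OF assms] by auto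
  moreover have "finite {i. i \<le> n \<and> t i \<noteq> 0}" by auto
  ultimately show ?thesis by (simp add: Max_le_iff)
qed

lemma simp_Exit:
  "simp (Exit P s X) n = {(a, b). a \<in> simp (nerve P) n \<and> singular_simplex n X b
      \<and> nerve_to_sing n a = simplex_map n s b}"
  by (simp add: Exit_def pullback_def Sing_def)

lemma act_Exit:
  "act (Exit P s X) = act (Exit Q s Y)"
  by (simp add: Exit_def pullback_def nerve_def Sing_def)

lemma mem_ExitQ:
  fixes X :: "'x topology" and s :: "'x \<Rightarrow> 'p::order" and P Q :: "'p set"
  assumes QP: "Q \<subseteq> P"
    and convex: "\<And>a b c. a \<in> Q \<Longrightarrow> b \<in> P \<Longrightarrow> c \<in> Q \<Longrightarrow> a \<le> b \<Longrightarrow> b \<le> c \<Longrightarrow> b \<in> Q"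
  shows "z \<in> simp (Exit Q s (subtopology X (topspace X \<inter> s -` Q))) n \<longleftrightarrow>
         z \<in> simp (Exit P s X) n \<and> fst z 0 \<in> Q \<and> fst z n \<in> Q"
proof (cases z)
  case (Pair c \<tau>)
  show ?thesis
  proof
    assume "z \<in> simp (Exit Q s (subtopology X (topspace X \<inter> s -` Q))) n"
    then have c: "c \<in> simp (nerve Q) n" and t: "singular_simplex n (subtopology X (topspace X \<inter> s -` Q)) \<tau>"
      and e: "nerve_to_sing n c = simplex_map n s \<tau>"
      by (auto simp: simp_Exit Pair)
    from c QP have "c \<in> simp (nerve P) n" by (auto simp: nerve_def)
    moreover from t have "singular_simplex n X \<tau>" by (simp add: singular_simplex_subtopology)
    moreover from c have "c 0 \<in> Q" "c n \<in> Q" by (auto simp: nerve_def)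
    ultimately show "z \<in> simp (Exit P s X) n \<and> fst z 0 \<in> Q \<and> fst z n \<in> Q"
      using e by (auto simp: simp_Exit Pair)
  next
    assume a: "z \<in> simp (Exit P s X) n \<and> fst z 0 \<in> Q \<and> fst z n \<in> Q"
    then have c: "c \<in> simp (nerve P) n" and t: "singular_simplex n X \<tau>"
      and e: "nerve_to_sing n c = simplex_map n s \<tau>" and c0: "c 0 \<in> Q" and cn: "c n \<in> Q"
      by (auto simp: simp_Exit Pair)
    have cQ: "c i \<in> Q" if "i \<le> n" for i
    proof -
      have "c 0 \<le> c i" "c i \<le> c n" "c i \<in> P" using c that by (auto simp: nerve_def)
      then show ?thesis using convex c0 cn by blast
    qed
    have cQ': "c \<in> simp (nerve Q) n" using c cQ by (auto simp: nerve_def)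
    have img: "\<tau> ` standard_simplex n \<subseteq> topspace X \<inter> s -` Q"
    proof
      fix y assume "y \<in> \<tau> ` standard_simplex n"
      then obtain t0 where t0: "t0 \<in> standard_simplex n" and y: "y = \<tau> t0" by auto
      have "y \<in> topspace X" using t t0 y
        by (auto simp: singular_simplex_def continuous_map_def)
      moreover have "nerve_to_sing n c t0 = simplex_map n s \<tau> t0" using e by simp
      then have "c (Max {i. i \<le> n \<and> t0 i \<noteq> 0}) = s y"
        using t0 y by (simp add: nerve_to_sing_def simplex_map_def)
      then have "s y \<in> Q" using cQ[OF max_le[OF t0]] by simp
      ultimately show "y \<in> topspace X \<inter> s -` Q" by simp
    qed
    show "z \<in> simp (Exit Q s (subtopology X (topspace X \<inter> s -` Q))) n"
      using cQ' t img e by (simp add: simp_Exit Pair singular_simplex_subtopology)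
  qed
qed

lemma act_nerve_fst:
  "fst (act (Exit P s X) m n \<theta> z) = (\<lambda>i. if i \<le> m then fst z (\<theta> i) else undefined)"
proof (cases z)
  case (Pair a b)
  show ?thesis unfolding Pair Exit_def pullback_def nerve_def by (simp only: sset.simps prod.case fst_conv)
qed

lemma shomotopic_refl: "shomotopic K K (\<lambda>n x. x) (\<lambda>n x. x)"
  unfolding shomotopic_def
  by (rule exI[of _ "\<lambda>n z. fst z"]) (auto simp: smap_def prod_sset_def split: prod.splits)

theorem lemma2p5:
  fixes X :: "'x topology" and s :: "'x \<Rightarrow> 'p::order" and P Q :: "'p set"
  assumes strat_X: "continuous_map X (alexandroff P) s"
    and QP: "Q \<subseteq> P"
    and convex: "\<And>a b c. a \<in> Q \<Longrightarrow> b \<in> P \<Longrightarrow> c \<in> Q \<Longrightarrow> a \<le> b \<Longrightarrow> b \<le> c \<Longrightarrow> b \<in> Q"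
    and strat_Y: "continuous_map (subtopology X (topspace X \<inter> s -` Q)) (alexandroff Q) s"
    and qcat: "quasi_category (Exit P s X)"
  shows "quasi_category (Exit Q s (subtopology X (topspace X \<inter> s -` Q)))
       \<and> fully_faithful (Exit Q s (subtopology X (topspace X \<inter> s -` Q))) (Exit P s X) (\<lambda>n z. z)"
proof -
  define C where "C = Exit Q s (subtopology X (topspace X \<inter> s -` Q))"
  define D where "D = Exit P s X"
  have mem: "z \<in> simp C n \<longleftrightarrow> z \<in> simp D n \<and> fst z 0 \<in> Q \<and> fst z n \<in> Q" for z n
    unfolding C_def D_def by (rule mem_ExitQ[OF QP convex])
  have actCD: "act C = act D" unfolding C_def D_def by (rule act_Exit[symmetric])
  have fstact: "fst (act D m n \<theta> z) = (\<lambda>i. if i \<le> m then fst z (\<theta> i) else undefined)" for m n \<theta> z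
    unfolding D_def by (rule act_nerve_fst)
  have ssD: "is_sset D" using qcat by (simp add: quasi_category_def D_def)
  have hornD: "\<And>n k y. 0 < k \<and> k < n
       \<and> (\<forall>i\<le>n. i \<noteq> k \<longrightarrow> y i \<in> simp D (n - 1))
       \<and> (\<forall>i j. i < j \<and> j \<le> n \<and> i \<noteq> k \<and> j \<noteq> k \<longrightarrow>
             act D (n - 2) (n - 1) (coface i) (y j) = act D (n - 2) (n - 1) (coface (j - 1)) (y i))
     \<Longrightarrow> (\<exists>x\<in>simp D n. \<forall>i\<le>n. i \<noteq> k \<longrightarrow> act D (n - 1) n (coface i) x = y i)"
    using qcat by (simp add: quasi_category_def D_def)
  have ssC: "is_sset C"
  proof -
    have "act C m n \<theta> x \<in> simp C m" if "simplex_op m n \<theta>" "x \<in> simp C n" for m n \<theta> x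
    proof -
      have xD: "x \<in> simp D n" "fst x 0 \<in> Q" "fst x n \<in> Q" using that(2) mem by auto
      have "act D m n \<theta> x \<in> simp D m" using ssD that(1) xD(1) unfolding is_sset_def by blast
      moreover have "\<theta> 0 \<le> n" "\<theta> m \<le> n" using that(1) by (auto simp: simplex_op_def)
      moreover have "fst x i \<in> Q" if "i \<le> n" for i
        using xD mem_ExitQ[OF QP convex] that \<open>x \<in> simp C n\<close>
        by (auto simp: C_def simp_Exit nerve_def)
      ultimately show ?thesis using mem actCD fstact by auto
    qed
    moreover have "\<forall>n x. x \<in> simp C n \<longrightarrow> act C n n id x = x"
    proof (intro allI impI)
      fix n x assume "x \<in> simp C n"
      then have "x \<in> simp D n" using mem by blast
      then show "act C n n id x = x" using ssD actCD unfolding is_sset_def by metis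
    qed
    moreover have "\<forall>k m n \<theta> \<psi> x. simplex_op m n \<theta> \<and> simplex_op k m \<psi> \<and> x \<in> simp C n \<longrightarrow>
          act C k n (\<theta> \<circ> \<psi>) x = act C k m \<psi> (act C m n \<theta> x)"
    proof (intro allI impI)
      fix k m n \<theta> \<psi> x assume a: "simplex_op m n \<theta> \<and> simplex_op k m \<psi> \<and> x \<in> simp C n"
      then have "x \<in> simp D n" using mem by blast
      then show "act C k n (\<theta> \<circ> \<psi>) x = act C k m \<psi> (act C m n \<theta> x)"
        using a ssD actCD unfolding is_sset_def by metis
    qed
    moreover have "\<forall>m n \<theta> \<theta>' x. (\<forall>i\<le>m. \<theta> i = \<theta>' i) \<longrightarrow> act C m n \<theta> x = act C m n \<theta>' x"
      unfolding actCD using ssD unfolding is_sset_def by blast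
    ultimately show ?thesis unfolding is_sset_def by blast
  qed
  have qC: "quasi_category C"
    unfolding quasi_category_def
  proof (intro conjI ssC allI impI)
    fix n k y
    assume H: "0 < k \<and> k < n
       \<and> (\<forall>i\<le>n. i \<noteq> k \<longrightarrow> y i \<in> simp C (n - 1))
       \<and> (\<forall>i j. i < j \<and> j \<le> n \<and> i \<noteq> k \<and> j \<noteq> k \<longrightarrow>
             act C (n - 2) (n - 1) (coface i) (y j) = act C (n - 2) (n - 1) (coface (j - 1)) (y i))"
    then obtain x where x: "x \<in> simp D n" and xf: "\<forall>i\<le>n. i \<noteq> k \<longrightarrow> act D (n - 1) n (coface i) x = y i"
      using hornD[of k n y] mem actCD by auto
    have y0: "y 0 \<in> simp C (n - 1)" and yn: "y n \<in> simp C (n - 1)" using H by auto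
    have "fst (y n) 0 \<in> Q" using yn mem by auto
    moreover have "fst (y n) 0 = fst x 0"
    proof -
      have "y n = act D (n - 1) n (coface n) x" using xf H by auto
      then have "fst (y n) 0 = fst (act D (n - 1) n (coface n) x) 0" by simp
      also have "\<dots> = fst x (coface n 0)" by (simp only: fstact) simp
      finally show ?thesis using H by (simp add: coface_def)
    qed
    moreover have "fst (y 0) (n - 1) \<in> Q" using y0 mem by auto
    moreover have "fst (y 0) (n - 1) = fst x n"
    proof -
      have "y 0 = act D (n - 1) n (coface 0) x" using xf H by auto
      then have "fst (y 0) (n - 1) = fst (act D (n - 1) n (coface 0) x) (n - 1)" by simp
      also have "\<dots> = fst x (coface 0 (n - 1))" by (simp only: fstact) simp
      finally show ?thesis using H by (simp add: coface_def)
    qed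
    ultimately have "x \<in> simp C n" using mem x by auto
    then show "\<exists>x\<in>simp C n. \<forall>i\<le>n. i \<noteq> k \<longrightarrow> act C (n - 1) n (coface i) x = y i"
      using xf actCD by auto
  qed
  have homEq: "homR C x y = homR D x y" if x: "x \<in> simp C 0" and y: "y \<in> simp C 0" for x y
  proof -
    have "simp (homR C x y) n = simp (homR D x y) n" for n
    proof -
      have "\<sigma> \<in> simp C (Suc n)" if s1: "\<sigma> \<in> simp D (Suc n)"
        and s2: "act D 0 (Suc n) (\<lambda>_. Suc n) \<sigma> = y"
        and s3: "act D n (Suc n) id \<sigma> = act D n 0 (\<lambda>_. 0) x" for \<sigma>
      proof -
        have "fst (act D 0 (Suc n) (\<lambda>_. Suc n) \<sigma>) 0 = fst y 0" using s2 by simp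
        then have a: "fst \<sigma> (Suc n) = fst y 0" using fstact by simp
        have "fst (act D n (Suc n) id \<sigma>) 0 = fst (act D n 0 (\<lambda>_. 0) x) 0" using s3 by simp
        then have b: "fst \<sigma> 0 = fst x 0" using fstact by simp
        show ?thesis using mem s1 a b x y by auto
      qed
      then show ?thesis unfolding homR_def using mem actCD by auto
    qed
    then show ?thesis unfolding homR_def using actCD by auto
  qed
  have ff: "fully_faithful C D (\<lambda>n z. z)"
    unfolding fully_faithful_def
  proof (intro conjI ballI qC)
    show "quasi_category D" using qcat D_def by simp
    show "smap (\<lambda>n z. z) C D" using mem actCD by (auto simp: smap_def)
    fix x y assume "x \<in> simp C 0" "y \<in> simp C 0"
    then have e: "homR C x y = homR D x y" by (rule homEq)
    show "shomotopy_equivalence (homR C x y) (homR D ((\<lambda>n z. z) 0 x) ((\<lambda>n z. z) 0 y)) (\<lambda>n \<sigma>. \<sigma>)"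
      unfolding e shomotopy_equivalence_def
      by (intro conjI exI[of _ "\<lambda>n z. z"]) (auto simp: smap_def shomotopic_refl)
  qed
  show ?thesis using qC ff C_def D_def by simp
qed

end
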